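(* Let $I,J\subset\mathbb{R}$ be open intervals and $f\colon I\to\mathbb{R}$, $g\colon J\to\mathbb{R}$ smooth functions. Let $\alpha(s)=(s,f(s),0)$ (a curve in the plane $\{z=0\}$) and $\beta(t)=(t,0,g(t))$ (a curve in the plane $\{y=0\}$), and consider the translation surface $$x(s,t)=\alpha(s)\ast\beta(t)=(s+t,\,f(s),\,g(t)),\qquad (s,t)\in I\times J,$$ in $\mathrm{Sol}_3$. Then this surface is minimal if and only if one of the following holds: (i) $f$ is constant, $f\equiv y_0$ (the surface is a piece of the plane $y=y_0$); (ii) $g$ is constant, $g\equiv z_0$ (the surface is a piece of the plane $z=z_0$); (iii) there are constants $a\neq 0$ and $b$ with $f(s)=as+b$ for all $s\in I$, and $g(t)=\tfrac12\zeta(t)+m$ where $e^{4m}=a^2$ and $\zeta\colon J\to\mathbb{R}$ is a smooth function satisfying $(\zeta')^2\cosh\zeta=c^2$ on $J$ for some constant $c>0$; equivalently, $I_0(\zeta(t))=\pm ct+d$ for some $d\in\mathbb{R}$, where $I_0(u)=\int_0^u\sqrt{\cosh\tau}\,d\tau$ (so $\zeta=I_0^{-1}(\pm ct+d)$). Moreover, the vertical planes $x=x_0$ are minimal translation surfaces of type I (obtained with $\alpha(s)=(x_0',s,0)$, $\beta(t)=(x_0'',0,t)$, $x_0'+x_0''=x_0$).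
   Context: $\mathrm{Sol}_3$ is $\mathbb{R}^3$ with coordinates $(x,y,z)$, the Riemannian metric $e^{2z}dx^2+e^{-2z}dy^2+dz^2$, and the Lie group operation $(x,y,z)\ast(x',y',z')=(x+e^{-z}x',\,y+e^{z}y',\,z+z')$, for which the metric is left-invariant. A translation surface $M(\alpha,\beta)$ is a surface parametrized by $x(s,t)=\alpha(s)\ast\beta(t)$ where $\alpha,\beta$ are curves lying in coordinate planes of $\mathbb{R}^3$; it is of type I if $\alpha\subset\{z=0\}$ and $\beta\subset\{y=0\}$. A surface is minimal if its mean curvature (half the trace of the Weingarten map, computed with the Levi-Civita connection of the metric above) vanishes identically. *)

theory Defs
  imports "HOL-Analysis.Analysis"
begin

(* Points of Sol_3 are vectors p :: real^3 with coordinates x = p$1, y = p$2, z = p$3. *)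

definition sol_pt :: "real \<Rightarrow> real \<Rightarrow> real \<Rightarrow> real^3" where
  "sol_pt a b c = vector [a, b, c]"

definition sol_mult :: "real^3 \<Rightarrow> real^3 \<Rightarrow> real^3" where
  "sol_mult p q = sol_pt (p$1 + exp (- (p$3)) * q$1) (p$2 + exp (p$3) * q$2) (p$3 + q$3)"

definition sol_g :: "real^3 \<Rightarrow> 3 \<Rightarrow> 3 \<Rightarrow> real" where
  "sol_g p i j = (if i = j then (if i = 1 then exp (2 * p$3) else if i = 2 then exp (-2 * p$3) else 1) else 0)"

definition sol_inner :: "real^3 \<Rightarrow> real^3 \<Rightarrow> real^3 \<Rightarrow> real" where
  "sol_inner p U V = (\<Sum>i\<in>UNIV. \<Sum>j\<in>UNIV. sol_g p i j * U$i * V$j)"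

definition sol_ginv :: "real^3 \<Rightarrow> real^3^3" where
  "sol_ginv p = matrix_inv (\<chi> i j. sol_g p i j)"

definition coord_pd :: "3 \<Rightarrow> (real^3 \<Rightarrow> real) \<Rightarrow> real^3 \<Rightarrow> real" where
  "coord_pd i \<phi> p = deriv (\<lambda>h. \<phi> (p + h *\<^sub>R axis i 1)) 0"

definition sol_christoffel :: "real^3 \<Rightarrow> 3 \<Rightarrow> 3 \<Rightarrow> 3 \<Rightarrow> real" where
  "sol_christoffel p k i j = (1/2) * (\<Sum>l\<in>UNIV. sol_ginv p $ k $ l *
      (coord_pd i (\<lambda>q. sol_g q j l) p + coord_pd j (\<lambda>q. sol_g q i l) p - coord_pd l (\<lambda>q. sol_g q i j) p))"

(* Levi-Civita covariant derivative along a curve/surface: given the ordinary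
   derivative D of the vector field V (in coordinates) along the direction U at p,
   (nabla_U V)^k = D^k + Gamma^k_ij U^i V^j *)
definition sol_cov :: "real^3 \<Rightarrow> real^3 \<Rightarrow> real^3 \<Rightarrow> real^3 \<Rightarrow> real^3" where
  "sol_cov p D U V = D + (\<chi> k. \<Sum>i\<in>UNIV. \<Sum>j\<in>UNIV. sol_christoffel p k i j * U$i * V$j)"

definition surf_s :: "(real \<Rightarrow> real \<Rightarrow> real^3) \<Rightarrow> real \<Rightarrow> real \<Rightarrow> real^3" where
  "surf_s X s t = vector_derivative (\<lambda>s'. X s' t) (at s)"

definition surf_t :: "(real \<Rightarrow> real \<Rightarrow> real^3) \<Rightarrow> real \<Rightarrow> real \<Rightarrow> real^3" where
  "surf_t X s t = vector_derivative (\<lambda>t'. X s t') (at t)"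

definition surf_regular :: "(real \<Rightarrow> real \<Rightarrow> real^3) \<Rightarrow> real \<Rightarrow> real \<Rightarrow> bool" where
  "surf_regular X s t \<longleftrightarrow>
     (\<forall>a b. a *\<^sub>R surf_s X s t + b *\<^sub>R surf_t X s t = 0 \<longrightarrow> a = 0 \<and> b = 0)"

definition sol_unit_normal :: "(real \<Rightarrow> real \<Rightarrow> real^3) \<Rightarrow> real \<Rightarrow> real \<Rightarrow> real^3 \<Rightarrow> bool" where
  "sol_unit_normal X s t N \<longleftrightarrow>
     sol_inner (X s t) N (surf_s X s t) = 0 \<and> sol_inner (X s t) N (surf_t X s t) = 0
     \<and> sol_inner (X s t) N N = 1"

(* Mean curvature (half the trace of the Weingarten map) w.r.t. the unit normal N:
   H = (E n - 2 F m + G l) / (2 (E G - F^2)), where E,F,G is the first fundamental form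
   and l = <nabla_{X_s} X_s, N>, m = <nabla_{X_s} X_t, N>, n = <nabla_{X_t} X_t, N>. *)
definition sol_mean_curv :: "(real \<Rightarrow> real \<Rightarrow> real^3) \<Rightarrow> real^3 \<Rightarrow> real \<Rightarrow> real \<Rightarrow> real" where
  "sol_mean_curv X N s t =
     (let p = X s t; Xs = surf_s X s t; Xt = surf_t X s t;
          Xss = vector_derivative (\<lambda>s'. surf_s X s' t) (at s);
          Xst = vector_derivative (\<lambda>t'. surf_s X s t') (at t);
          Xtt = vector_derivative (\<lambda>t'. surf_t X s t') (at t);
          E = sol_inner p Xs Xs; F = sol_inner p Xs Xt; G = sol_inner p Xt Xt;
          l = sol_inner p (sol_cov p Xss Xs Xs) N;
          m = sol_inner p (sol_cov p Xst Xs Xt) N;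
          n = sol_inner p (sol_cov p Xtt Xt Xt) N
      in (E * n - 2 * F * m + G * l) / (2 * (E * G - F^2)))"

definition sol_minimal :: "(real \<Rightarrow> real \<Rightarrow> real^3) \<Rightarrow> (real \<times> real) set \<Rightarrow> bool" where
  "sol_minimal X U \<longleftrightarrow>
     (\<forall>(s,t)\<in>U. surf_regular X s t \<longrightarrow>
        (\<forall>N. sol_unit_normal X s t N \<longrightarrow> sol_mean_curv X N s t = 0))"

definition translation_surface :: "(real \<Rightarrow> real^3) \<Rightarrow> (real \<Rightarrow> real^3) \<Rightarrow> real \<Rightarrow> real \<Rightarrow> real^3" where
  "translation_surface \<alpha> \<beta> s t = sol_mult (\<alpha> s) (\<beta> t)"

definition smooth_on :: "real set \<Rightarrow> (real \<Rightarrow> real) \<Rightarrow> bool" where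
  "smooth_on S f \<longleftrightarrow> (\<forall>n. (deriv ^^ n) f differentiable_on S)"

(* I_0(u) = int_0^u sqrt(cosh tau) dtau  (oriented integral) *)
definition I0 :: "real \<Rightarrow> real" where
  "I0 u = (LBINT \<tau>=0..u. sqrt (cosh \<tau>))"

end

theory Submission
  imports Defs
begin

lemma three_ne[simp]: "(1::3) \<noteq> 2" "(1::3) \<noteq> 3" "(2::3) \<noteq> 3" "(2::3) \<noteq> 1" "(3::3) \<noteq> 1" "(3::3) \<noteq> 2"
  by simp_all

lemma sol_pt_nth[simp]: "sol_pt a b c $ 1 = a" "sol_pt a b c $ 2 = b" "sol_pt a b c $ 3 = c"
  by (simp_all add: sol_pt_def)

lemma vec3_eq_iff: "(x::real^3) = y \<longleftrightarrow> x$1 = y$1 \<and> x$2 = y$2 \<and> x$3 = y$3"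
  by (simp add: vec_eq_iff forall_3)

lemma sol_pt_eta: "(x::real^3) = sol_pt (x$1) (x$2) (x$3)"
  by (simp add: vec3_eq_iff)

lemma sol_inner_eq: "sol_inner p U V = exp (2*p$3)*U$1*V$1 + exp(-2*p$3)*U$2*V$2 + U$3*V$3"
  by (simp add: sol_inner_def sol_g_def sum_3)

definition ginvm :: "real^3 \<Rightarrow> real^3^3" where
  "ginvm p = (\<chi> i j. if i = j then (if i = 1 then exp (-2*p$3) else if i = 2 then exp (2*p$3) else 1) else 0)"

lemma matrix_inv_eqI:
  fixes A B :: "real^3^3"
  assumes "A ** B = mat 1" "B ** A = mat 1"
  shows "matrix_inv A = B"
proof -
  have ex: "\<exists>A'. A ** A' = mat 1 \<and> A' ** A = mat 1" using assms by blast
  let ?C = "matrix_inv A"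
  have C: "A ** ?C = mat 1 \<and> ?C ** A = mat 1"
    unfolding matrix_inv_def using someI_ex[OF ex] by simp
  have "?C = ?C ** (A ** B)" using assms by (simp add: matrix_mul_rid)
  also have "\<dots> = (?C ** A) ** B" by (simp add: matrix_mul_assoc)
  also have "\<dots> = B" using C by (simp add: matrix_mul_lid)
  finally show ?thesis .
qed

lemma sol_ginv_eq: "sol_ginv p = ginvm p"
  unfolding sol_ginv_def
  apply (rule matrix_inv_eqI)
   apply (simp_all add: vec_eq_iff forall_3 matrix_matrix_mult_def mat_def sum_3 ginvm_def sol_g_def)
   apply (simp_all add: exp_minus_inverse mult_exp_exp)
  done

lemma axis_nth3: "(axis i (1::real) :: real^3) $ 3 = (if i = 3 then 1 else 0)"
  by (auto simp: axis_def)

lemma deriv_exp_lin: "deriv (\<lambda>h. exp (k * (a + h * b))) 0 = k * b * exp (k * (a::real))"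
proof -
  have "((\<lambda>h. exp (k * (a + h * b))) has_real_derivative exp (k * (a + 0 * b)) * (k * (0 + 1 * b))) (at 0)"
    by (intro derivative_eq_intros) auto
  then show ?thesis by (intro DERIV_imp_deriv) (simp add: mult_ac)
qed

lemma deriv_const0: "deriv (\<lambda>h. c) (x::real) = (0::real)"
  by (rule DERIV_imp_deriv) simp

lemma coord_pd_g: "coord_pd i (\<lambda>q. sol_g q j l) p =
   (if j = l \<and> i = 3 then (if j = 1 then 2 * exp (2*p$3) else if j = 2 then -2 * exp (-2*p$3) else 0) else 0)"
proof -
  define c :: real where "c = (if i = 3 then 1 else 0)"
  have e: "(p + h *\<^sub>R axis i 1) $ 3 = p$3 + h * c" for h
    by (simp add: axis_nth3 c_def)
  have d1: "deriv (\<lambda>h. exp (2 * (p$3 + h * c))) 0 = 2 * c * exp (2*p$3)"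
    by (rule deriv_exp_lin)
  have d2: "deriv (\<lambda>h. exp (-2 * (p$3 + h * c))) 0 = -2 * c * exp (-2*p$3)"
    by (rule deriv_exp_lin)
  show ?thesis
    unfolding coord_pd_def sol_g_def e
    using d1 d2 by (cases "j = l"; cases "j = 1"; cases "j = 2"; simp add: deriv_const0 c_def)
qed

definition Gam :: "real \<Rightarrow> 3 \<Rightarrow> 3 \<Rightarrow> 3 \<Rightarrow> real" where
  "Gam z k i j = (if k = 1 \<and> ((i = 1 \<and> j = 3) \<or> (i = 3 \<and> j = 1)) then 1
     else if k = 2 \<and> ((i = 2 \<and> j = 3) \<or> (i = 3 \<and> j = 2)) then -1
     else if k = 3 \<and> i = 1 \<and> j = 1 then - exp (2*z)
     else if k = 3 \<and> i = 2 \<and> j = 2 then exp (-2*z) else 0)"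

lemma sol_christoffel_all: "\<forall>k i j. sol_christoffel p k i j = Gam (p$3) k i j"
  unfolding forall_3 sol_christoffel_def sol_ginv_eq coord_pd_g sum_3 ginvm_def Gam_def
  by (simp add: exp_minus_inverse mult_exp_exp)

lemma sol_christoffel_eq: "sol_christoffel p k i j = Gam (p$3) k i j"
  using sol_christoffel_all by blast

lemma sol_cov_eq: "sol_cov p D U V = D + sol_pt (U$1*V$3 + U$3*V$1) (-(U$2*V$3 + U$3*V$2))
    (- exp (2*p$3) * U$1*V$1 + exp (-2*p$3)*U$2*V$2)"
  unfolding sol_cov_def sol_christoffel_eq
  by (simp add: vec3_eq_iff sum_3 Gam_def algebra_simps)

lemma sol_pt_decomp: "sol_pt a b c = a *\<^sub>R axis 1 1 + b *\<^sub>R axis 2 1 + c *\<^sub>R axis 3 1"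
  by (simp add: vec3_eq_iff axis_def)

lemma has_vector_derivative_sol_pt:
  assumes "(a has_real_derivative a') (at x)" "(b has_real_derivative b') (at x)" "(c has_real_derivative c') (at x)"
  shows "((\<lambda>x. sol_pt (a x) (b x) (c x)) has_vector_derivative sol_pt a' b' c') (at x)"
proof -
  have "((\<lambda>x. a x *\<^sub>R axis 1 1 + b x *\<^sub>R axis 2 1 + c x *\<^sub>R (axis 3 1 :: real^3)) has_vector_derivative
     (a x *\<^sub>R 0 + a' *\<^sub>R axis 1 1 + (b x *\<^sub>R 0 + b' *\<^sub>R axis 2 1) + (c x *\<^sub>R 0 + c' *\<^sub>R axis 3 1))) (at x)"
    by (intro derivative_intros assms)
  then show ?thesis by (simp add: sol_pt_decomp)
qed

definition X0 :: "(real \<Rightarrow> real) \<Rightarrow> (real \<Rightarrow> real) \<Rightarrow> real \<Rightarrow> real \<Rightarrow> real^3" where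
  "X0 f g s t = sol_pt (s + t) (f s) (g t)"

lemma transl_eq: "translation_surface (\<lambda>s. sol_pt s (f s) 0) (\<lambda>t. sol_pt t 0 (g t)) = X0 f g"
  by (simp add: fun_eq_iff translation_surface_def sol_mult_def X0_def)

lemma X0_s:
  assumes "(f has_real_derivative f1) (at s)"
  shows "surf_s (X0 f g) s t = sol_pt 1 f1 0"
  unfolding surf_s_def X0_def
  by (intro vector_derivative_at has_vector_derivative_sol_pt assms derivative_eq_intros) auto

lemma X0_t:
  assumes "(g has_real_derivative g1) (at t)"
  shows "surf_t (X0 f g) s t = sol_pt 1 0 g1"
  unfolding surf_t_def X0_def
  by (intro vector_derivative_at has_vector_derivative_sol_pt assms derivative_eq_intros) auto

lemma X0_mc:
  assumes I: "open I" "s \<in> I" and J: "open J" "t \<in> J"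
    and df: "\<And>s. s \<in> I \<Longrightarrow> (f has_real_derivative f1 s) (at s)"
    and df1: "(f1 has_real_derivative f2) (at s)"
    and dg: "\<And>t. t \<in> J \<Longrightarrow> (g has_real_derivative g1 t) (at t)"
    and dg1: "(g1 has_real_derivative g2) (at t)"
  shows "sol_mean_curv (X0 f g) N s t =
     (2 * g1 t * (exp (2 * g t) + exp (- 2 * g t) * (f1 s)^2 - exp (2 * g t)) * (exp (2 * g t) * N $ 1) +
      (2 * exp (2 * g t) * f1 s * g1 t + (exp (2 * g t) + (g1 t)^2) * f2) * (exp (- 2 * g t) * N $ 2) +
      ((exp (2 * g t) + exp (- 2 * g t) * (f1 s)^2) * (f2 * 0 + g2 - exp (2 * g t)) +
       2 * exp (2 * g t) * exp (2 * g t) +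
       (exp (2 * g t) + (g1 t)^2) * (- exp (2 * g t) + exp (- 2 * g t) * (f1 s)^2)) * N $ 3) /
     (2 * ((exp (2 * g t) + exp (- 2 * g t) * (f1 s)^2) * (exp (2 * g t) + (g1 t)^2) - (exp (2 * g t))^2))"
proof -
  have ss: "vector_derivative (\<lambda>s'. surf_s (X0 f g) s' t) (at s) = sol_pt 0 f2 0"
  proof (rule vector_derivative_at)
    have "((\<lambda>s'. sol_pt 1 (f1 s') 0) has_vector_derivative sol_pt 0 f2 0) (at s)"
      by (intro has_vector_derivative_sol_pt df1 DERIV_const)
    then show "((\<lambda>s'. surf_s (X0 f g) s' t) has_vector_derivative sol_pt 0 f2 0) (at s)"
      by (rule has_vector_derivative_transform_within_open[OF _ I]) (metis X0_s df)
  qed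
  have tt: "vector_derivative (\<lambda>t'. surf_t (X0 f g) s t') (at t) = sol_pt 0 0 g2"
  proof (rule vector_derivative_at)
    have "((\<lambda>t'. sol_pt 1 0 (g1 t')) has_vector_derivative sol_pt 0 0 g2) (at t)"
      by (intro has_vector_derivative_sol_pt dg1 DERIV_const)
    then show "((\<lambda>t'. surf_t (X0 f g) s t') has_vector_derivative sol_pt 0 0 g2) (at t)"
      by (rule has_vector_derivative_transform_within_open[OF _ J]) (metis X0_t dg)
  qed
  have st: "vector_derivative (\<lambda>t'. surf_s (X0 f g) s t') (at t) = 0"
  proof -
    have "(\<lambda>t'. surf_s (X0 f g) s t') = (\<lambda>t'. sol_pt 1 (f1 s) 0)"
      using X0_s[OF df[OF I(2)]] by simp
    then show ?thesis by (simp add: vector_derivative_const_at)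
  qed
  show ?thesis
    unfolding sol_mean_curv_def Let_def ss tt st X0_s[OF df[OF I(2)]] X0_t[OF dg[OF J(2)]]
    by (simp add: sol_inner_eq sol_cov_eq X0_def) (simp add: algebra_simps power2_eq_square)
qed

definition pde :: "real \<Rightarrow> real \<Rightarrow> real \<Rightarrow> real \<Rightarrow> real \<Rightarrow> real" where
  "pde a a2 b b2 z = (let w = exp (2*z) in a*b2*(w^2 + a^2) + a2*b*(w^2 + w*b^2) + a*b^2*(w^2 - a^2))"

lemma alg_key:
  fixes w wi a b aa bb xa xb xc :: real
  assumes wwi: "w * wi = 1" and o1: "xa + a*xb = 0" and o2: "xa + b*xc = 0"
  defines "E \<equiv> w + wi*a^2" and "G \<equiv> w + b^2"
  defines "V1 \<equiv> 2*b*(E - w)" and "V2 \<equiv> 2*w*a*b + G*aa" and "V3 \<equiv> E*(bb - w) + 2*w*w + G*(- w + wi*a^2)"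
  defines "P \<equiv> a*bb*(w^2 + a^2) + aa*b*(w^2 + w*b^2) + a*b^2*(w^2 - a^2)"
  shows "w*(V1*xa+V2*xb+V3*xc)*(a*b) = - P*xa"
    and "w*(V1*xa+V2*xb+V3*xc)*b = P*xb"
    and "w*(V1*xa+V2*xb+V3*xc)*a = P*xc"
  using wwi o1 o2 unfolding E_def G_def V1_def V2_def V3_def P_def by algebra+

lemma X0_regular:
  assumes "(f has_real_derivative a) (at s)" "(g has_real_derivative b) (at t)"
  shows "surf_regular (X0 f g) s t \<longleftrightarrow> a \<noteq> 0 \<or> b \<noteq> 0"
proof -
  have "surf_regular (X0 f g) s t \<longleftrightarrow> (\<forall>x y. x + y = 0 \<and> x*a = 0 \<and> y*b = 0 \<longrightarrow> x = 0 \<and> y = 0)"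
    unfolding surf_regular_def X0_s[OF assms(1)] X0_t[OF assms(2)] by (simp add: vec3_eq_iff)
  also have "\<dots> \<longleftrightarrow> a \<noteq> 0 \<or> b \<noteq> 0"
  proof
    assume h: "\<forall>x y. x + y = 0 \<and> x*a = 0 \<and> y*b = 0 \<longrightarrow> x = 0 \<and> y = 0"
    show "a \<noteq> 0 \<or> b \<noteq> 0"
    proof (rule ccontr)
      assume "\<not> (a \<noteq> 0 \<or> b \<noteq> 0)"
      then show False using h[rule_format, of 1 "-1"] by simp
    qed
  next
    assume "a \<noteq> 0 \<or> b \<noteq> 0"
    then show "\<forall>x y. x + y = 0 \<and> x*a = 0 \<and> y*b = 0 \<longrightarrow> x = 0 \<and> y = 0" by auto
  qed
  finally show ?thesis .
qed

lemma X0_unit_normal: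
  assumes "(f has_real_derivative a) (at s)" "(g has_real_derivative b) (at t)"
  shows "sol_unit_normal (X0 f g) s t N \<longleftrightarrow>
    exp (2*g t) * N$1 + exp (-2*g t) * a * N$2 = 0 \<and> exp (2*g t) * N$1 + b * N$3 = 0 \<and>
    exp (2*g t) * (N$1)^2 + exp (-2*g t) * (N$2)^2 + (N$3)^2 = 1"
  unfolding sol_unit_normal_def X0_s[OF assms(1)] X0_t[OF assms(2)] sol_inner_eq
  by (simp add: X0_def power2_eq_square mult_ac)

lemma point_min:
  assumes I: "open I" "s \<in> I" and J: "open J" "t \<in> J"
    and df: "\<And>s. s \<in> I \<Longrightarrow> (f has_real_derivative f1 s) (at s)"
    and df1: "(f1 has_real_derivative f2) (at s)"
    and dg: "\<And>t. t \<in> J \<Longrightarrow> (g has_real_derivative g1 t) (at t)"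
    and dg1: "(g1 has_real_derivative g2) (at t)"
  shows "(surf_regular (X0 f g) s t \<longrightarrow> (\<forall>N. sol_unit_normal (X0 f g) s t N \<longrightarrow> sol_mean_curv (X0 f g) N s t = 0))
     \<longleftrightarrow> pde (f1 s) f2 (g1 t) g2 (g t) = 0"
proof -
  define a where "a = f1 s"
  define b where "b = g1 t"
  define w where "w = exp (2 * g t)"
  define wi where "wi = exp (-2 * g t)"
  have w0: "w > 0" "wi > 0" by (simp_all add: w_def wi_def)
  have wwi: "w * wi = 1" by (simp add: w_def wi_def mult_exp_exp)
  have dfa: "(f has_real_derivative a) (at s)" using df[OF I(2)] by (simp add: a_def)
  have dgb: "(g has_real_derivative b) (at t)" using dg[OF J(2)] by (simp add: b_def)
  define E where "E = w + wi*a^2"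
  define G where "G = w + b^2"
  define V1 where "V1 = 2*b*(E - w)"
  define V2 where "V2 = 2*w*a*b + G*f2"
  define V3 where "V3 = E*(f2 * 0 + g2 - w) + 2*w*w + G*(- w + wi*a^2)"
  define P where "P = a*g2*(w^2 + a^2) + f2*b*(w^2 + w*b^2) + a*b^2*(w^2 - a^2)"
  have Pe: "pde (f1 s) f2 (g1 t) g2 (g t) = P"
    by (simp add: pde_def P_def a_def b_def w_def Let_def)
  have mc: "sol_mean_curv (X0 f g) N s t = (V1*(w*N$1) + V2*(wi*N$2) + V3*N$3) / (2*(E*G - w^2))" for N
    unfolding V1_def V2_def V3_def E_def G_def a_def b_def w_def wi_def
    by (rule X0_mc[OF I J df df1 dg dg1])
  have un: "sol_unit_normal (X0 f g) s t N \<longleftrightarrow> w * N$1 + wi * a * N$2 = 0 \<and> w * N$1 + b * N$3 = 0 \<and>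
      w * (N$1)^2 + wi * (N$2)^2 + (N$3)^2 = 1" for N
    unfolding X0_unit_normal[OF dfa dgb] w_def wi_def ..
  have reg: "surf_regular (X0 f g) s t \<longleftrightarrow> a \<noteq> 0 \<or> b \<noteq> 0" by (rule X0_regular[OF dfa dgb])
  have keys: "w*(V1*(w*N$1) + V2*(wi*N$2) + V3*N$3)*b = P*(wi*N$2)"
     "w*(V1*(w*N$1) + V2*(wi*N$2) + V3*N$3)*a = P*(N$3)"
    if "w * N$1 + wi * a * N$2 = 0" "w * N$1 + b * N$3 = 0" for N :: "real^3"
    using alg_key(2,3)[where w=w and wi=wi and a=a and b=b and aa=f2 and bb=g2 and xa="w*N$1" and xb="wi*N$2" and xc="N$3"] wwi that
    unfolding V1_def V2_def V3_def E_def G_def P_def by (simp_all add: mult_ac)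
  have EG: "E*G - w^2 > 0" if "a \<noteq> 0 \<or> b \<noteq> 0"
  proof -
    have "E*G - w^2 = w*b^2 + wi*a^2*(w + b^2)" by (simp add: E_def G_def algebra_simps power2_eq_square)
    moreover have "w*b^2 + wi*a^2*(w + b^2) > 0"
    proof -
      have p1: "w*b^2 \<ge> 0" "wi*a^2*(w + b^2) \<ge> 0" using w0 by simp_all
      have "w*b^2 > 0 \<or> wi*a^2*(w + b^2) > 0"
        using that w0 by (auto intro!: mult_pos_pos add_pos_nonneg)
      then show ?thesis using p1 by linarith
    qed
    ultimately show ?thesis by simp
  qed
  show ?thesis
  proof (cases "a \<noteq> 0 \<or> b \<noteq> 0")
    case False
    then show ?thesis using reg Pe P_def by simp
  next
    case True
    have "(\<forall>N. sol_unit_normal (X0 f g) s t N \<longrightarrow> sol_mean_curv (X0 f g) N s t = 0) \<longleftrightarrow> P = 0"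
    proof
      assume h: "\<forall>N. sol_unit_normal (X0 f g) s t N \<longrightarrow> sol_mean_curv (X0 f g) N s t = 0"
      define q where "q = wi*a^2*b^2 + w*b^2 + a^2"
      have q0: "q > 0"
      proof -
        have p1: "wi*a^2*b^2 \<ge> 0" "w*b^2 \<ge> 0" "a^2 \<ge> 0" using w0 by simp_all
        have "w*b^2 > 0 \<or> a^2 > 0" using True w0 by auto
        then show ?thesis using p1 unfolding q_def by linarith
      qed
      define N where "N = sol_pt (wi*a*b / sqrt q) (- w*b / sqrt q) (- a / sqrt q)"
      have sq: "sqrt q ^ 2 = q" using q0 by simp
      have o1: "w * N$1 + wi * a * N$2 = 0" unfolding N_def using wwi
        by (simp add: field_simps)
      have o2: "w * N$1 + b * N$3 = 0" unfolding N_def using wwi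
        by (simp add: field_simps)
      have o3: "w * (N$1)^2 + wi * (N$2)^2 + (N$3)^2 = 1"
      proof -
        have "w * (N$1)^2 + wi * (N$2)^2 + (N$3)^2 = (w*wi*(wi*a^2*b^2) + (w*wi)*w*b^2 + a^2) / (sqrt q)^2"
          unfolding N_def by (simp add: power_divide field_simps) (simp add: algebra_simps power2_eq_square add_divide_distrib)
        also have "\<dots> = 1" using wwi sq q0 by (simp add: q_def)
        finally show ?thesis .
      qed
      have "sol_mean_curv (X0 f g) N s t = 0" using h un o1 o2 o3 by blast
      then have "V1*(w*N$1) + V2*(wi*N$2) + V3*N$3 = 0" using mc EG[OF True] by simp
      then have "P*(wi*N$2) = 0" "P*(N$3) = 0" using keys[OF o1 o2] by simp_all
      moreover have "wi*N$2 \<noteq> 0 \<or> N$3 \<noteq> 0"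
        using True wwi q0 w0 unfolding N_def by auto
      ultimately show "P = 0" by auto
    next
      assume P0: "P = 0"
      show "\<forall>N. sol_unit_normal (X0 f g) s t N \<longrightarrow> sol_mean_curv (X0 f g) N s t = 0"
      proof (intro allI impI)
        fix N assume "sol_unit_normal (X0 f g) s t N"
        then have o: "w * N$1 + wi * a * N$2 = 0" "w * N$1 + b * N$3 = 0" using un by blast+
        have "w*(V1*(w*N$1) + V2*(wi*N$2) + V3*N$3)*b = 0" "w*(V1*(w*N$1) + V2*(wi*N$2) + V3*N$3)*a = 0"
          using keys[OF o] P0 by simp_all
        then have "V1*(w*N$1) + V2*(wi*N$2) + V3*N$3 = 0" using True w0 by auto
        then show "sol_mean_curv (X0 f g) N s t = 0" using mc by simp
      qed
    qed
    then show ?thesis using reg True Pe by simp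
  qed
qed

lemma smooth_D:
  assumes "smooth_on S f" "open S" "x \<in> S"
  shows "((deriv^^n) f has_real_derivative (deriv^^(Suc n)) f x) (at x)"
proof -
  have "(deriv^^n) f differentiable_on S" using assms(1) unfolding smooth_on_def by blast
  then have "(deriv^^n) f differentiable at x" using assms(2,3) differentiable_on_eq_differentiable_at by blast
  then show ?thesis using DERIV_deriv_iff_real_differentiable by fastforce
qed

lemma smooth_D0: "smooth_on S f \<Longrightarrow> open S \<Longrightarrow> x \<in> S \<Longrightarrow> (f has_real_derivative deriv f x) (at x)"
  using smooth_D[of S f x 0] by simp

lemma smooth_D1: "smooth_on S f \<Longrightarrow> open S \<Longrightarrow> x \<in> S \<Longrightarrow> (deriv f has_real_derivative deriv (deriv f) x) (at x)"
  using smooth_D[of S f x 1] by simp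

lemma smooth_D2: "smooth_on S f \<Longrightarrow> open S \<Longrightarrow> x \<in> S \<Longrightarrow> (deriv (deriv f) has_real_derivative deriv (deriv (deriv f)) x) (at x)"
  using smooth_D[of S f x 2] by (simp add: numeral_2_eq_2)

lemma smooth_affine:
  assumes sm: "smooth_on S f" and S: "open S"
  shows "smooth_on S (\<lambda>x. c * f x + d)"
proof -
  let ?h = "\<lambda>x. c * f x + d"
  have eq: "\<forall>x\<in>S. (deriv^^n) ?h x = c * (deriv^^n) f x + (if n = 0 then d else 0)" for n
  proof (induction n)
    case 0 then show ?case by simp
  next
    case (Suc n)
    show ?case
    proof
      fix x assume x: "x \<in> S"
      have "((\<lambda>y. c * (deriv^^n) f y + (if n = 0 then d else 0)) has_real_derivative c * (deriv^^(Suc n)) f x) (at x)"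
        using smooth_D[OF sm S x, of n] by (auto intro!: derivative_eq_intros)
      then have "((deriv^^n) ?h has_real_derivative c * (deriv^^(Suc n)) f x) (at x)"
        by (rule has_field_derivative_transform_within_open[OF _ S x]) (use Suc in auto)
      then show "(deriv^^(Suc n)) ?h x = c * (deriv^^(Suc n)) f x + (if Suc n = 0 then d else 0)"
        by (simp add: DERIV_imp_deriv)
    qed
  qed
  show ?thesis unfolding smooth_on_def
  proof
    fix n
    show "(deriv^^n) ?h differentiable_on S"
      unfolding differentiable_on_eq_differentiable_at[OF S]
    proof
      fix x assume x: "x \<in> S"
      have "((\<lambda>y. c * (deriv^^n) f y + (if n = 0 then d else 0)) has_real_derivative c * (deriv^^(Suc n)) f x) (at x)"
        using smooth_D[OF sm S x, of n] by (auto intro!: derivative_eq_intros)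
      then have "((deriv^^n) ?h has_real_derivative c * (deriv^^(Suc n)) f x) (at x)"
        by (rule has_field_derivative_transform_within_open[OF _ S x]) (use eq in auto)
      then show "(deriv^^n) ?h differentiable at x" using real_differentiable_def by blast
    qed
  qed
qed

lemma minimal_iff:
  assumes I: "open I" and J: "open J" and sf: "smooth_on I f" and sg: "smooth_on J g"
  shows "sol_minimal (X0 f g) (I \<times> J) \<longleftrightarrow>
    (\<forall>s\<in>I. \<forall>t\<in>J. pde (deriv f s) (deriv (deriv f) s) (deriv g t) (deriv (deriv g) t) (g t) = 0)"
proof -
  have "(surf_regular (X0 f g) s t \<longrightarrow> (\<forall>N. sol_unit_normal (X0 f g) s t N \<longrightarrow> sol_mean_curv (X0 f g) N s t = 0))
     \<longleftrightarrow> pde (deriv f s) (deriv (deriv f) s) (deriv g t) (deriv (deriv g) t) (g t) = 0"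
    if "s \<in> I" "t \<in> J" for s t
    by (rule point_min[OF I that(1) J that(2)]) (auto intro: smooth_D0[OF sf I] smooth_D1[OF sf I] smooth_D0[OF sg J] smooth_D1[OF sg J] that)
  then show ?thesis unfolding sol_minimal_def by auto
qed

lemma vertical_eq: "translation_surface (\<lambda>s. sol_pt x0' s 0) (\<lambda>t. sol_pt x0'' 0 t) s t = sol_pt (x0' + x0'') s t"
  by (simp add: translation_surface_def sol_mult_def)

lemma vertical_min: "sol_minimal (translation_surface (\<lambda>s. sol_pt x0' s 0) (\<lambda>t. sol_pt x0'' 0 t)) UNIV"
proof -
  define Y where "Y = translation_surface (\<lambda>s. sol_pt x0' s 0) (\<lambda>t. sol_pt x0'' 0 t)"
  have Y: "Y = (\<lambda>s t. sol_pt (x0' + x0'') s t)" unfolding Y_def by (simp add: fun_eq_iff vertical_eq)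
  have ys: "surf_s Y s t = sol_pt 0 1 0" for s t
    unfolding surf_s_def Y
    by (intro vector_derivative_at has_vector_derivative_sol_pt) (auto intro!: derivative_eq_intros)
  have yt: "surf_t Y s t = sol_pt 0 0 1" for s t
    unfolding surf_t_def Y
    by (intro vector_derivative_at has_vector_derivative_sol_pt) (auto intro!: derivative_eq_intros)
  have yss: "vector_derivative (\<lambda>s'. surf_s Y s' t) (at s) = 0" for s t
    unfolding ys by (simp add: vector_derivative_const_at)
  have yst: "vector_derivative (\<lambda>t'. surf_s Y s t') (at t) = 0" for s t
    unfolding ys by (simp add: vector_derivative_const_at)
  have ytt: "vector_derivative (\<lambda>t'. surf_t Y s t') (at t) = 0" for s t
    unfolding yt by (simp add: vector_derivative_const_at)
  have "sol_mean_curv Y N s t = 0" if "sol_unit_normal Y s t N" for s t N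
  proof -
    have "N$2 = 0" "N$3 = 0" using that unfolding sol_unit_normal_def ys yt sol_inner_eq by simp_all
    then show ?thesis
      unfolding sol_mean_curv_def Let_def ys yt yss yst ytt
      by (simp add: sol_inner_eq sol_cov_eq)
  qed
  then show ?thesis unfolding sol_minimal_def Y_def by auto
qed

lemma I0_deriv: "(I0 has_real_derivative sqrt (cosh u)) (at u)"
proof -
  define a where "a = min 0 u - 1"
  define b where "b = max 0 u + 1"
  have cont: "continuous_on {a..b} (\<lambda>x. sqrt (cosh x))" by (intro continuous_intros)
  have "((\<lambda>v. LBINT y=0..v. sqrt (cosh y)) has_vector_derivative sqrt (cosh u)) (at u within {a..b})"
    using interval_integral_FTC2[OF _ _ cont, of 0 u] unfolding zero_ereal_def[symmetric]
    by (auto simp: a_def b_def)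
  moreover have "at u within {a..b} = at u" by (rule at_within_Icc_at) (auto simp: a_def b_def)
  ultimately show ?thesis
    unfolding has_real_derivative_iff_has_vector_derivative I0_def[abs_def] by simp
qed

lemma ode_equiv:
  fixes \<zeta> :: "real \<Rightarrow> real"
  assumes J: "open J" "is_interval J" and c: "c > 0" and sm: "smooth_on J \<zeta>"
  shows "(\<forall>t\<in>J. (deriv \<zeta> t)^2 * cosh (\<zeta> t) = c^2) \<longleftrightarrow>
         (\<exists>d. (\<forall>t\<in>J. I0 (\<zeta> t) = c * t + d) \<or> (\<forall>t\<in>J. I0 (\<zeta> t) = - c * t + d))"
proof -
  have Dz: "(\<zeta> has_real_derivative deriv \<zeta> t) (at t)" if "t \<in> J" for t
    using smooth_D0[OF sm J(1) that] .
  have DI: "((\<lambda>t. I0 (\<zeta> t)) has_real_derivative sqrt (cosh (\<zeta> t)) * deriv \<zeta> t) (at t)" if "t \<in> J" for t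
    using DERIV_chain2[OF I0_deriv Dz[OF that]] .
  have cvx: "convex J" using J(2) by (rule is_interval_convex)
  show ?thesis
  proof
    assume h: "\<forall>t\<in>J. (deriv \<zeta> t)^2 * cosh (\<zeta> t) = c^2"
    have nz: "deriv \<zeta> t \<noteq> 0" if "t \<in> J" for t using h that c by fastforce
    have contz: "continuous_on J (deriv \<zeta>)"
    proof -
      have "deriv \<zeta> differentiable_on J" using sm unfolding smooth_on_def
        by (metis funpow_0 funpow_Suc_right o_apply One_nat_def funpow.simps(2) comp_id)
      then show ?thesis by (rule differentiable_imp_continuous_on)
    qed
    have sign: "(\<forall>t\<in>J. deriv \<zeta> t > 0) \<or> (\<forall>t\<in>J. deriv \<zeta> t < 0)"
    proof (rule ccontr)
      assume "\<not> ?thesis"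
      then obtain t1 t2 where t: "t1 \<in> J" "t2 \<in> J" "deriv \<zeta> t1 \<le> 0" "deriv \<zeta> t2 \<ge> 0"
        by (auto simp: not_less)
      have "connected (deriv \<zeta> ` J)"
        by (rule connected_continuous_image[OF contz]) (use J(2) is_interval_connected_1 in blast)
      then have "is_interval (deriv \<zeta> ` J)" using is_interval_connected_1 by blast
      then have "0 \<in> deriv \<zeta> ` J" unfolding is_interval_1 using t by blast
      then show False using nz by auto
    qed
    have sq: "(sqrt (cosh (\<zeta> t)) * deriv \<zeta> t)^2 = c^2" if "t \<in> J" for t
      using h that by (simp add: power_mult_distrib mult.commute)
    from sign show "\<exists>d. (\<forall>t\<in>J. I0 (\<zeta> t) = c * t + d) \<or> (\<forall>t\<in>J. I0 (\<zeta> t) = - c * t + d)"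
    proof
      assume pos: "\<forall>t\<in>J. deriv \<zeta> t > 0"
      have e: "sqrt (cosh (\<zeta> t)) * deriv \<zeta> t = c" if "t \<in> J" for t
      proof -
        have "sqrt (cosh (\<zeta> t)) * deriv \<zeta> t \<ge> 0" using pos that by (simp add: less_imp_le)
        then show ?thesis using sq[OF that] c by (simp add: power2_eq_iff_nonneg)
      qed
      have "\<exists>d. \<forall>t\<in>J. I0 (\<zeta> t) - c * t = d"
      proof (rule has_field_derivative_zero_constant[OF cvx])
        fix t assume "t \<in> J"
        then have "((\<lambda>t. I0 (\<zeta> t) - c * t) has_real_derivative c - c * 1) (at t)"
          using DI[of t] e[of t] by (auto intro!: derivative_eq_intros)
        then show "((\<lambda>t. I0 (\<zeta> t) - c * t) has_real_derivative 0) (at t within J)"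
          by (simp add: has_field_derivative_at_within)
      qed
      then obtain d where "\<forall>t\<in>J. I0 (\<zeta> t) - c * t = d" by blast
      then show ?thesis by (intro exI[of _ d] disjI1) (auto simp: algebra_simps)
    next
      assume neg: "\<forall>t\<in>J. deriv \<zeta> t < 0"
      have e: "sqrt (cosh (\<zeta> t)) * deriv \<zeta> t = - c" if "t \<in> J" for t
      proof -
        have "(- (sqrt (cosh (\<zeta> t)) * deriv \<zeta> t))^2 = c^2" using sq[OF that] by simp
        moreover have "- (sqrt (cosh (\<zeta> t)) * deriv \<zeta> t) \<ge> 0"
          using neg that by (auto intro!: mult_nonneg_nonpos simp: less_imp_le)
        ultimately have "- (sqrt (cosh (\<zeta> t)) * deriv \<zeta> t) = c" using c by (metis less_imp_le power2_eq_iff_nonneg)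
        then show ?thesis by simp
      qed
      have "\<exists>d. \<forall>t\<in>J. I0 (\<zeta> t) + c * t = d"
      proof (rule has_field_derivative_zero_constant[OF cvx])
        fix t assume "t \<in> J"
        then have "((\<lambda>t. I0 (\<zeta> t) + c * t) has_real_derivative - c + c * 1) (at t)"
          using DI[of t] e[of t] by (auto intro!: derivative_eq_intros)
        then show "((\<lambda>t. I0 (\<zeta> t) + c * t) has_real_derivative 0) (at t within J)"
          by (simp add: has_field_derivative_at_within)
      qed
      then obtain d where "\<forall>t\<in>J. I0 (\<zeta> t) + c * t = d" by blast
      then show ?thesis by (intro exI[of _ d] disjI2) (auto simp: algebra_simps)
    qed
  next
    assume "\<exists>d. (\<forall>t\<in>J. I0 (\<zeta> t) = c * t + d) \<or> (\<forall>t\<in>J. I0 (\<zeta> t) = - c * t + d)"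
    then obtain d e where de: "e = c \<or> e = - c" "\<forall>t\<in>J. I0 (\<zeta> t) = e * t + d"
      by (metis mult_minus_left)
    show "\<forall>t\<in>J. (deriv \<zeta> t)^2 * cosh (\<zeta> t) = c^2"
    proof
      fix t assume t: "t \<in> J"
      have "((\<lambda>t. I0 (\<zeta> t)) has_real_derivative e) (at t)"
      proof (rule has_field_derivative_transform_within_open[OF _ J(1) t])
        show "((\<lambda>t. e * t + d) has_real_derivative e) (at t)" by (auto intro!: derivative_eq_intros)
      qed (use de in auto)
      then have "sqrt (cosh (\<zeta> t)) * deriv \<zeta> t = e" using DI[OF t] DERIV_unique by blast
      then have "(sqrt (cosh (\<zeta> t)) * deriv \<zeta> t)^2 = c^2" using de by auto
      then show "(deriv \<zeta> t)^2 * cosh (\<zeta> t) = c^2" by (simp add: power_mult_distrib mult.commute)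
    qed
  qed
qed

lemma deriv_zero_on_open:
  assumes "open S" "x \<in> S" "\<And>y. y \<in> S \<Longrightarrow> h y = 0" "(h has_real_derivative D) (at x)"
  shows "D = 0"
proof -
  have "(h has_real_derivative 0) (at x)"
    by (rule has_field_derivative_transform_within_open[of "\<lambda>_. 0" 0 x S]) (use assms in auto)
  then show ?thesis using assms(4) DERIV_unique by blast
qed

lemma caseB_alg1:
  fixes u w p al be dP :: real
  assumes E1: "w^2*(p+u^2) + al*w*u*(w+u^2) = 0" and E2: "p - u^2 + be*w*u*(w+u^2) = 0"
    and dP: "dP = 2*(2*u*w)*u^2 + 2*w*(2*u*p) + al*(p*(w+u^2) + u*(2*u*w + 2*u*p))
        - be*(2*w*(2*u*w)*u*(w+u^2) + w^2*p*(w+u^2) + w^2*u*(2*u*w + 2*u*p))"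
    and d0: "dP = 0"
  shows "u^2 * w^2 * (p*(3*w+u^2) - 2*u^2*w) = 0"
proof -
  define S where "S = w + u^2"
  define Q where "Q = p*S + 2*u^2*w + 2*u^2*p"
  define R where "R = 4*w^2*u^2*S + w^2*p*S + 2*w^3*u^2 + 2*w^2*u^2*p"
  have id: "w*u*S*dP = 2*(u^2 * w^2 * (p*(3*w+u^2) - 2*u^2*w))
     + (w^2*(p+u^2) + al*w*u*(w+u^2))*Q - (p - u^2 + be*w*u*(w+u^2))*R"
    unfolding dP S_def Q_def R_def by algebra
  show ?thesis using id E1 E2 d0 by simp
qed

lemma caseB_alg2:
  fixes u w p be :: real
  assumes E2: "p - u^2 + be*w*u*(w+u^2) = 0" and k1: "p*(3*w+u^2) = 2*u^2*w"
    and u: "u \<noteq> 0" and w: "w > 0"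
  shows "be*w*(3*w+u^2) = u"
proof -
  have id: "u*(w+u^2)*(be*w*(3*w+u^2) - u) = (3*w+u^2)*(p - u^2 + be*w*u*(w+u^2)) - (p*(3*w+u^2) - 2*u^2*w)"
    by algebra
  have "w + u^2 > 0" using w by (simp add: add_pos_nonneg)
  then have "u*(w+u^2) \<noteq> 0" using u by simp
  then show ?thesis using id E2 k1 by simp
qed

lemma caseB_alg3:
  fixes u w p be dpsi :: real
  assumes k1: "p*(3*w+u^2) = 2*u^2*w" and k2: "be*w*(3*w+u^2) = u"
    and d: "dpsi = be*(2*u*w*(3*w+u^2) + w*(6*u*w + 2*u*p)) - p" and d0: "dpsi = 0"
    and u: "u \<noteq> 0" and w: "w > 0"
  shows False
proof -
  have id: "(3*w+u^2)*dpsi = 2*u^2*(5*w+u^2+p) + (2*u*(3*w+u^2)+6*u*w+2*u*p)*(be*w*(3*w+u^2) - u)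
      - (p*(3*w+u^2) - 2*u^2*w)"
    unfolding d by algebra
  have "u^2*(5*w+u^2+p) = 0" using id k1 k2 d0 by simp
  moreover have "3*w+u^2 > 0" using w by (simp add: add_pos_nonneg)
  moreover then have "p \<ge> 0" using k1 by (metis zero_le_mult_iff zero_le_power2 w less_imp_le mult_nonneg_nonneg
       not_le mult_pos_pos zero_less_numeral mult_le_0_iff)
  ultimately have "5*w+u^2+p = 0" using u by simp
  moreover have "5*w+u^2+p > 0" using w \<open>p \<ge> 0\<close> by (simp add: add_pos_nonneg)
  ultimately show False by simp
qed

lemma ev_ne_nhds:
  assumes "(f has_real_derivative D) (at x)" "f x \<noteq> 0"
  shows "eventually (\<lambda>y. f y \<noteq> 0) (nhds x)"
proof -
  have "isCont f x" using assms(1) DERIV_isCont by blast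
  then have "(f \<longlongrightarrow> f x) (nhds x)" by (simp add: isCont_def tendsto_at_iff_tendsto_nhds)
  then show ?thesis using assms(2) tendsto_imp_eventually_ne by blast
qed

lemma caseB:
  fixes f1 f2 g g1 g2 :: "real \<Rightarrow> real"
  assumes I: "open I" and J: "open J"
   and Df1: "\<And>s. s \<in> I \<Longrightarrow> (f1 has_real_derivative f2 s) (at s)"
   and Dg: "\<And>t. t \<in> J \<Longrightarrow> (g has_real_derivative g1 t) (at t)"
   and Dg1: "\<And>t. t \<in> J \<Longrightarrow> (g1 has_real_derivative g2 t) (at t)"
   and P: "\<And>s t. s \<in> I \<Longrightarrow> t \<in> J \<Longrightarrow> pde (f1 s) (f2 s) (g1 t) (g2 t) (g t) = 0"
   and t0: "t0 \<in> J" "g1 t0 \<noteq> 0" and s0: "s0 \<in> I" "f2 s0 \<noteq> 0"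
  shows False
proof -
  define w where "w t = exp (2 * g t)" for t
  define A where "A t = (w t)^2 * (g2 t + (g1 t)^2)" for t
  define B where "B t = g2 t - (g1 t)^2" for t
  define C where "C t = w t * g1 t * (w t + (g1 t)^2)" for t
  have w0: "w t > 0" for t by (simp add: w_def)
  have P': "f1 s * A t + (f1 s)^3 * B t + f2 s * C t = 0" if "s \<in> I" "t \<in> J" for s t
  proof -
    have "f1 s * A t + (f1 s)^3 * B t + f2 s * C t = pde (f1 s) (f2 s) (g1 t) (g2 t) (g t)"
      unfolding pde_def Let_def A_def B_def C_def w_def by algebra
    then show ?thesis using P[OF that] by simp
  qed
  have C0: "C t0 \<noteq> 0"
  proof -
    have "w t0 + (g1 t0)^2 > 0" using w0[of t0] by (simp add: add_pos_nonneg)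
    then show ?thesis using t0(2) w0[of t0] by (simp add: C_def)
  qed
  define al where "al = - A t0 / C t0"
  define be where "be = - B t0 / C t0"
  have hq: "f2 s = al * f1 s + be * (f1 s)^3" if "s \<in> I" for s
  proof -
    have "f2 s * C t0 = - (f1 s * A t0 + (f1 s)^3 * B t0)" using P'[OF that t0(1)] by simp
    then show ?thesis using C0 unfolding al_def be_def by (simp add: field_simps)
  qed
  define P1 where "P1 = f1 s0"
  have P1: "P1 \<noteq> 0" using hq[OF s0(1)] s0(2) P1_def by auto
  define X where "X t = A t + al * C t" for t
  define Y where "Y t = B t + be * C t" for t
  have hx: "f1 s * X t + (f1 s)^3 * Y t = 0" if "s \<in> I" "t \<in> J" for s t
  proof -
    have "f1 s * X t + (f1 s)^3 * Y t = f1 s * A t + (f1 s)^3 * B t + f2 s * C t"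
      unfolding X_def Y_def hq[OF that(1)] by (simp add: algebra_simps)
    then show ?thesis using P'[OF that] by simp
  qed
  have Y0: "Y t = 0" if t: "t \<in> J" for t
  proof (rule ccontr)
    assume Yn: "Y t \<noteq> 0"
    have "P1 * (X t + P1^2 * Y t) = 0" using hx[OF s0(1) t] unfolding P1_def by algebra
    then have Xt: "X t = -(P1^2 * Y t)" using P1 by simp
    have hs: "(f1 s)^2 = P1^2" if "s \<in> I" "f1 s \<noteq> 0" for s
    proof -
      have "f1 s * ((f1 s)^2 - P1^2) * Y t = 0" using hx[OF that(1) t] Xt by algebra
      then show ?thesis using that(2) Yn by simp
    qed
    have ev1: "eventually (\<lambda>s. f1 s \<noteq> 0) (nhds s0)"
      using ev_ne_nhds[OF Df1[OF s0(1)]] P1 P1_def by simp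
    have ev2: "eventually (\<lambda>s. s \<in> I) (nhds s0)" by (rule eventually_nhds_in_open[OF I s0(1)])
    have ev: "eventually (\<lambda>s. (f1 s)^2 = P1^2) (nhds s0)"
      using ev1 ev2 by eventually_elim (use hs in auto)
    have d1: "((\<lambda>s. (f1 s)^2) has_real_derivative 2 * f1 s0 * f2 s0) (at s0)"
      using Df1[OF s0(1)] by (auto intro!: derivative_eq_intros)
    then have "((\<lambda>s. P1^2) has_real_derivative 2 * f1 s0 * f2 s0) (at s0)"
      using DERIV_cong_ev[OF refl ev refl] by simp
    then have "2 * f1 s0 * f2 s0 = 0" using DERIV_const DERIV_unique by blast
    then show False using P1 s0 P1_def by simp
  qed
  have X0: "X t = 0" if "t \<in> J" for t
    using hx[OF s0(1) that] Y0[OF that] P1 P1_def by simp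
  have E1: "(w t)^2*(g2 t + (g1 t)^2) + al*w t*g1 t*(w t + (g1 t)^2) = 0" if "t \<in> J" for t
    using X0[OF that] unfolding X_def A_def C_def by (simp add: mult_ac)
  have E2: "g2 t - (g1 t)^2 + be*w t*g1 t*(w t + (g1 t)^2) = 0" if "t \<in> J" for t
    using Y0[OF that] unfolding Y_def B_def C_def by (simp add: mult_ac)
  define \<Phi> where "\<Phi> t = 2 * w t * (g1 t)^2 + al * g1 t * (w t + (g1 t)^2) - be * (w t)^2 * g1 t * (w t + (g1 t)^2)" for t
  have \<Phi>0: "\<Phi> t = 0" if "t \<in> J" for t
  proof -
    have "w t * \<Phi> t = ((w t)^2*(g2 t + (g1 t)^2) + al*w t*g1 t*(w t + (g1 t)^2))
        - (w t)^2 * (g2 t - (g1 t)^2 + be*w t*g1 t*(w t + (g1 t)^2))"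
      unfolding \<Phi>_def by algebra
    then have "w t * \<Phi> t = 0" using E1[OF that] E2[OF that] by simp
    then show ?thesis using w0[of t] by simp
  qed
  have Dw: "(w has_real_derivative 2 * g1 t * w t) (at t)" if "t \<in> J" for t
    unfolding w_def[abs_def] using Dg[OF that] by (auto intro!: derivative_eq_intros)
  have D\<Phi>: "(\<Phi> has_real_derivative
      2*(2*g1 t*w t)*(g1 t)^2 + 2*w t*(2*g1 t*g2 t) + al*(g2 t*(w t+(g1 t)^2) + g1 t*(2*g1 t*w t + 2*g1 t*g2 t))
        - be*(2*w t*(2*g1 t*w t)*g1 t*(w t+(g1 t)^2) + (w t)^2*g2 t*(w t+(g1 t)^2) + (w t)^2*g1 t*(2*g1 t*w t + 2*g1 t*g2 t))) (at t)"
    if "t \<in> J" for t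
    unfolding \<Phi>_def[abs_def] using Dw[OF that] Dg1[OF that]
    by (auto intro!: derivative_eq_intros simp: algebra_simps power2_eq_square)
  have key1: "g2 t * (3 * w t + (g1 t)^2) = 2 * (g1 t)^2 * w t" if "t \<in> J" "g1 t \<noteq> 0" for t
  proof -
    have "(g1 t)^2 * (w t)^2 * (g2 t*(3*w t+(g1 t)^2) - 2*(g1 t)^2*w t) = 0"
      by (rule caseB_alg1[OF E1[OF that(1)] E2[OF that(1)] refl deriv_zero_on_open[OF J that(1) \<Phi>0 D\<Phi>[OF that(1)]]])
    then show ?thesis using that(2) w0[of t] by simp
  qed
  have key2: "be * w t * (3 * w t + (g1 t)^2) = g1 t" if "t \<in> J" "g1 t \<noteq> 0" for t
    by (rule caseB_alg2[OF E2[OF that(1)] key1[OF that] that(2) w0])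
  define \<psi> where "\<psi> t = be * w t * (3 * w t + (g1 t)^2) - g1 t" for t
  have ev1: "eventually (\<lambda>t. g1 t \<noteq> 0) (nhds t0)" using ev_ne_nhds[OF Dg1[OF t0(1)] t0(2)] .
  have ev2: "eventually (\<lambda>t. t \<in> J) (nhds t0)" by (rule eventually_nhds_in_open[OF J t0(1)])
  have ev: "eventually (\<lambda>t. \<psi> t = 0) (nhds t0)"
    using ev1 ev2 by eventually_elim (use key2 \<psi>_def in auto)
  have D\<psi>: "(\<psi> has_real_derivative
     be*(2*g1 t0*w t0*(3*w t0+(g1 t0)^2) + w t0*(6*g1 t0*w t0 + 2*g1 t0*g2 t0)) - g2 t0) (at t0)"
    unfolding \<psi>_def[abs_def] using Dw[OF t0(1)] Dg1[OF t0(1)]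
    by (auto intro!: derivative_eq_intros simp: algebra_simps power2_eq_square)
  then have "((\<lambda>t. 0) has_real_derivative
     be*(2*g1 t0*w t0*(3*w t0+(g1 t0)^2) + w t0*(6*g1 t0*w t0 + 2*g1 t0*g2 t0)) - g2 t0) (at t0)"
    using DERIV_cong_ev[OF refl ev refl] by simp
  then have d0: "be*(2*g1 t0*w t0*(3*w t0+(g1 t0)^2) + w t0*(6*g1 t0*w t0 + 2*g1 t0*g2 t0)) - g2 t0 = 0"
    using DERIV_const DERIV_unique by blast
  show False
    by (rule caseB_alg3[OF key1[OF t0] key2[OF t0] refl d0 t0(2) w0])
qed

lemma cosh_real_exp: "cosh (x::real) = (exp x + exp (-x)) / 2"
  by (simp add: cosh_def)

lemma sinh_real_exp: "sinh (x::real) = (exp x - exp (-x)) / 2"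
  by (simp add: sinh_def)

lemma caseA:
  fixes f f1 f2 g g1 g2 :: "real \<Rightarrow> real"
  assumes I: "open I" "is_interval I" and J: "open J" "is_interval J" and sg: "smooth_on J g"
   and Df: "\<And>s. s \<in> I \<Longrightarrow> (f has_real_derivative f1 s) (at s)"
   and Df1: "\<And>s. s \<in> I \<Longrightarrow> (f1 has_real_derivative f2 s) (at s)"
   and Dg: "\<And>t. t \<in> J \<Longrightarrow> (g has_real_derivative g1 t) (at t)"
   and Dg1: "\<And>t. t \<in> J \<Longrightarrow> (g1 has_real_derivative g2 t) (at t)"
   and P: "\<And>s t. s \<in> I \<Longrightarrow> t \<in> J \<Longrightarrow> pde (f1 s) (f2 s) (g1 t) (g2 t) (g t) = 0"
   and f20: "\<And>s. s \<in> I \<Longrightarrow> f2 s = 0"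
   and s1: "s1 \<in> I" "f1 s1 \<noteq> 0" and t0: "t0 \<in> J" "g1 t0 \<noteq> 0"
  shows "\<exists>a b m c \<zeta>. a \<noteq> 0 \<and> (\<forall>s\<in>I. f s = a * s + b) \<and> exp (4 * m) = a^2
            \<and> c > 0 \<and> smooth_on J \<zeta> \<and> (\<forall>t\<in>J. (deriv \<zeta> t)^2 * cosh (\<zeta> t) = c^2)
            \<and> (\<forall>t\<in>J. g t = \<zeta> t / 2 + m)"
proof -
  have cvxI: "convex I" using I(2) by (rule is_interval_convex)
  have cvxJ: "convex J" using J(2) by (rule is_interval_convex)
  obtain a where ha: "\<forall>s\<in>I. f1 s = a"
    using has_field_derivative_zero_constant[OF cvxI, of f1] Df1 f20
    by (metis has_field_derivative_at_within)
  have a0: "a \<noteq> 0" using ha s1 by auto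
  obtain b where hb: "\<forall>s\<in>I. f s - a * s = b"
  proof -
    have "\<exists>b. \<forall>s\<in>I. f s - a * s = b"
    proof (rule has_field_derivative_zero_constant[OF cvxI])
      fix s assume s: "s \<in> I"
      have "((\<lambda>s. f s - a * s) has_real_derivative f1 s - a * 1) (at s)"
        using Df[OF s] by (auto intro!: derivative_eq_intros)
      then show "((\<lambda>s. f s - a * s) has_real_derivative 0) (at s within I)"
        using ha s by (simp add: has_field_derivative_at_within)
    qed
    then show ?thesis using that by blast
  qed
  define m where "m = ln \<bar>a\<bar> / 2"
  have e2m: "exp (2 * m) = \<bar>a\<bar>" using a0 by (simp add: m_def)
  have e4m: "exp (4 * m) = a^2"
  proof -
    have "exp (4 * m) = exp (2 * m) * exp (2 * m)" by (simp add: mult_exp_exp)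
    then show ?thesis using e2m by (simp add: power2_eq_square)
  qed
  define \<zeta> where "\<zeta> = (\<lambda>t. 2 * g t + (- 2 * m))"
  have sz: "smooth_on J \<zeta>" unfolding \<zeta>_def by (rule smooth_affine[OF sg J(1)])
  have Dz: "(\<zeta> has_real_derivative 2 * g1 t) (at t)" if "t \<in> J" for t
    unfolding \<zeta>_def using Dg[OF that] by (auto intro!: derivative_eq_intros)
  have dz: "deriv \<zeta> t = 2 * g1 t" if "t \<in> J" for t using Dz[OF that] by (rule DERIV_imp_deriv)
  have D1: "g2 t * ((exp (2 * g t))^2 + a^2) + (g1 t)^2 * ((exp (2 * g t))^2 - a^2) = 0" if "t \<in> J" for t
  proof -
    have "a * (g2 t * ((exp (2 * g t))^2 + a^2) + (g1 t)^2 * ((exp (2 * g t))^2 - a^2)) = 0"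
      using P[OF s1(1) that] ha f20[OF s1(1)] s1(1) unfolding pde_def Let_def by (simp add: algebra_simps)
    then show ?thesis using a0 by simp
  qed
  have wz: "exp (2 * g t) = \<bar>a\<bar> * exp (\<zeta> t)" for t
  proof -
    have "exp (2 * g t) = exp (\<zeta> t + 2 * m)" by (simp add: \<zeta>_def)
    also have "\<dots> = exp (\<zeta> t) * exp (2 * m)" by (simp add: exp_add)
    finally show ?thesis using e2m by simp
  qed
  have ode: "g2 t * cosh (\<zeta> t) + (g1 t)^2 * sinh (\<zeta> t) = 0" if "t \<in> J" for t
  proof -
    define E where "E = exp (\<zeta> t)"
    have E0: "E > 0" by (simp add: E_def)
    have "a^2 * (g2 t * (E^2 + 1) + (g1 t)^2 * (E^2 - 1)) = 0"
      using D1[OF that] unfolding wz E_def[symmetric] by (simp add: power_mult_distrib algebra_simps)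
    then have h: "g2 t * (E^2 + 1) + (g1 t)^2 * (E^2 - 1) = 0" using a0 by simp
    have "g2 t * cosh (\<zeta> t) + (g1 t)^2 * sinh (\<zeta> t) = (g2 t * (E^2 + 1) + (g1 t)^2 * (E^2 - 1)) / (2 * E)"
      unfolding cosh_real_exp sinh_real_exp exp_minus E_def[symmetric] using E0
      by (simp add: field_simps power2_eq_square)
    then show ?thesis using h by simp
  qed
  define K where "K t = (2 * g1 t)^2 * cosh (\<zeta> t)" for t
  have "\<exists>k. \<forall>t\<in>J. K t = k"
  proof (rule has_field_derivative_zero_constant[OF cvxJ])
    fix t assume t: "t \<in> J"
    have "(K has_real_derivative 2 * (2 * g1 t) * (2 * g2 t) * cosh (\<zeta> t) + (2 * g1 t)^2 * (sinh (\<zeta> t) * (2 * g1 t))) (at t)"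
      unfolding K_def[abs_def] using Dg1[OF t] Dz[OF t]
      by (auto intro!: derivative_eq_intros)
    moreover have "2 * (2 * g1 t) * (2 * g2 t) * cosh (\<zeta> t) + (2 * g1 t)^2 * (sinh (\<zeta> t) * (2 * g1 t))
        = 8 * g1 t * (g2 t * cosh (\<zeta> t) + (g1 t)^2 * sinh (\<zeta> t))"
      by (simp add: algebra_simps power2_eq_square)
    ultimately have "(K has_real_derivative 0) (at t)" using ode[OF t] by simp
    then show "(K has_real_derivative 0) (at t within J)" by (simp add: has_field_derivative_at_within)
  qed
  then obtain k where hk: "\<forall>t\<in>J. K t = k" by blast
  have k0: "k > 0" using hk t0 by (auto simp: K_def)
  define c where "c = sqrt k"
  have c0: "c > 0" using k0 by (simp add: c_def)
  have "\<forall>t\<in>J. (deriv \<zeta> t)^2 * cosh (\<zeta> t) = c^2"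
    using hk k0 dz by (simp add: K_def c_def)
  moreover have "\<forall>t\<in>J. g t = \<zeta> t / 2 + m" by (simp add: \<zeta>_def field_simps)
  moreover have "\<forall>s\<in>I. f s = a * s + b" using hb by (simp add: algebra_simps)
  ultimately show ?thesis using a0 e4m c0 sz by blast
qed

lemma pde_iii:
  fixes a m z z1 z2 :: real
  assumes e4m: "exp (4 * m) = a^2" and ode: "2 * z2 * cosh z + z1^2 * sinh z = 0"
  shows "pde a 0 (z1/2) (z2/2) (z/2 + m) = 0"
proof -
  define E where "E = exp z"
  define M where "M = exp (2 * m)"
  have E0: "E > 0" and M0: "M > 0" by (simp_all add: E_def M_def)
  have M2: "M^2 = a^2" using e4m unfolding M_def by (simp add: power2_eq_square mult_exp_exp)
  have w: "exp (2 * (z/2 + m)) = E * M" by (simp add: E_def M_def mult_exp_exp algebra_simps)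
  have "pde a 0 (z1/2) (z2/2) (z/2 + m) = a * (z2/2 * ((E*M)^2 + a^2) + (z1/2)^2 * ((E*M)^2 - a^2))"
    unfolding pde_def Let_def w by (simp add: algebra_simps)
  also have "\<dots> = a * a^2 * (z2/2 * (E^2 + 1) + (z1/2)^2 * (E^2 - 1))"
    by (simp add: power_mult_distrib M2 algebra_simps)
  also have "\<dots> = a * a^2 * E / 2 * (2 * z2 * cosh z + z1^2 * sinh z)"
    unfolding cosh_real_exp sinh_real_exp exp_minus E_def[symmetric] using E0
    by (simp add: field_simps power2_eq_square)
  finally show ?thesis using ode by simp
qed

lemma deriv_on_eq:
  assumes "open S" "x \<in> S" "\<And>y. y \<in> S \<Longrightarrow> h y = k y" "(k has_real_derivative D) (at x)"
    "(h has_real_derivative D') (at x)"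
  shows "D' = D"
proof -
  have "(h has_real_derivative D) (at x)"
    by (rule has_field_derivative_transform_within_open[OF assms(4,1,2)]) (use assms(3) in auto)
  then show ?thesis using assms(5) DERIV_unique by blast
qed

lemma classify_if:
  assumes I: "open I" and J: "open J" and sf: "smooth_on I f" and sg: "smooth_on J g"
    and H: "(\<exists>y0. \<forall>s\<in>I. f s = y0)
      \<or> (\<exists>z0. \<forall>t\<in>J. g t = z0)
      \<or> (\<exists>a b m c \<zeta>. a \<noteq> 0 \<and> (\<forall>s\<in>I. f s = a * s + b) \<and> exp (4 * m) = a^2
            \<and> c > 0 \<and> smooth_on J \<zeta> \<and> (\<forall>t\<in>J. (deriv \<zeta> t)^2 * cosh (\<zeta> t) = c^2)
            \<and> (\<forall>t\<in>J. g t = \<zeta> t / 2 + m))"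
  shows "\<forall>s\<in>I. \<forall>t\<in>J. pde (deriv f s) (deriv (deriv f) s) (deriv g t) (deriv (deriv g) t) (g t) = 0"
proof -
  have constd: "deriv h x = 0 \<and> deriv (deriv h) x = 0"
    if S: "open S" "smooth_on S h" "\<forall>y\<in>S. h y = k" "x \<in> S" for S h k x
  proof -
    have d0: "deriv h y = 0" if "y \<in> S" for y
      by (rule deriv_on_eq[OF S(1) that, of h "\<lambda>_. k"]) (use S that in \<open>auto intro: smooth_D0\<close>)
    have "deriv (deriv h) x = 0"
      by (rule deriv_zero_on_open[OF S(1) S(4) d0 smooth_D1[OF S(2,1,4)]])
    then show ?thesis using d0[OF S(4)] by simp
  qed
  from H show ?thesis
  proof (elim disjE exE conjE)
    fix y0 assume h: "\<forall>s\<in>I. f s = y0"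
    have "deriv f s = 0 \<and> deriv (deriv f) s = 0" if "s \<in> I" for s using constd[OF I sf h that] .
    then show ?thesis by (auto simp: pde_def)
  next
    fix z0 assume h: "\<forall>t\<in>J. g t = z0"
    have "deriv g t = 0 \<and> deriv (deriv g) t = 0" if "t \<in> J" for t using constd[OF J sg h that] .
    then show ?thesis by (auto simp: pde_def)
  next
    fix a b m c \<zeta>
    assume a0: "a \<noteq> 0" and fl: "\<forall>s\<in>I. f s = a * s + b" and e4m: "exp (4 * m) = a^2"
      and c0: "c > 0" and sz: "smooth_on J \<zeta>" and ode: "\<forall>t\<in>J. (deriv \<zeta> t)^2 * cosh (\<zeta> t) = c^2"
      and gz: "\<forall>t\<in>J. g t = \<zeta> t / 2 + m"
    have f1: "deriv f s = a" if "s \<in> I" for s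
      by (rule deriv_on_eq[OF I that, of f "\<lambda>s. a * s + b"])
         (use fl that in \<open>auto intro!: derivative_eq_intros smooth_D0[OF sf I]\<close>)
    have f2: "deriv (deriv f) s = 0" if "s \<in> I" for s
    proof -
      have "((\<lambda>s. deriv f s - a) has_real_derivative deriv (deriv f) s - 0) (at s)"
        using smooth_D1[OF sf I that] by (auto intro!: derivative_eq_intros)
      then show ?thesis using deriv_zero_on_open[OF I that, of "\<lambda>s. deriv f s - a"] f1 by auto
    qed
    have g1: "deriv g t = deriv \<zeta> t / 2" if "t \<in> J" for t
      by (rule deriv_on_eq[OF J that, of g "\<lambda>t. \<zeta> t / 2 + m"])
         (use gz that in \<open>auto intro!: derivative_eq_intros smooth_D0[OF sg J] smooth_D0[OF sz J]\<close>)
    have g2: "deriv (deriv g) t = deriv (deriv \<zeta>) t / 2" if "t \<in> J" for t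
      by (rule deriv_on_eq[OF J that, of "deriv g" "\<lambda>t. deriv \<zeta> t / 2"])
         (use g1 that in \<open>auto intro!: derivative_eq_intros smooth_D1[OF sg J] smooth_D1[OF sz J]\<close>)
    have zode: "2 * deriv (deriv \<zeta>) t * cosh (\<zeta> t) + (deriv \<zeta> t)^2 * sinh (\<zeta> t) = 0" if t: "t \<in> J" for t
    proof -
      have D: "((\<lambda>t. (deriv \<zeta> t)^2 * cosh (\<zeta> t) - c^2) has_real_derivative
          deriv \<zeta> t * (2 * deriv (deriv \<zeta>) t * cosh (\<zeta> t) + (deriv \<zeta> t)^2 * sinh (\<zeta> t))) (at t)"
        using smooth_D1[OF sz J t] smooth_D0[OF sz J t]
        by (auto intro!: derivative_eq_intros simp: algebra_simps power2_eq_square)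
      have "deriv \<zeta> t * (2 * deriv (deriv \<zeta>) t * cosh (\<zeta> t) + (deriv \<zeta> t)^2 * sinh (\<zeta> t)) = 0"
        by (rule deriv_zero_on_open[OF J t _ D]) (use ode in auto)
      moreover have "deriv \<zeta> t \<noteq> 0" using ode t c0 by fastforce
      ultimately show ?thesis by simp
    qed
    show ?thesis
    proof (intro ballI)
      fix s t assume s: "s \<in> I" and t: "t \<in> J"
      show "pde (deriv f s) (deriv (deriv f) s) (deriv g t) (deriv (deriv g) t) (g t) = 0"
        unfolding f1[OF s] f2[OF s] g1[OF t] g2[OF t] gz[rule_format, OF t]
        by (rule pde_iii[OF e4m zode[OF t]])
    qed
  qed
qed

theorem mainTheorem1:
  fixes I J :: "real set" and f g :: "real \<Rightarrow> real"
  assumes "open I" "is_interval I" "I \<noteq> {}"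
      and "open J" "is_interval J" "J \<noteq> {}"
      and "smooth_on I f" "smooth_on J g"
  shows
    "(sol_minimal (translation_surface (\<lambda>s. sol_pt s (f s) 0) (\<lambda>t. sol_pt t 0 (g t))) (I \<times> J)
      \<longleftrightarrow>
        (\<exists>y0. \<forall>s\<in>I. f s = y0)
      \<or> (\<exists>z0. \<forall>t\<in>J. g t = z0)
      \<or> (\<exists>a b m c \<zeta>. a \<noteq> 0 \<and> (\<forall>s\<in>I. f s = a * s + b) \<and> exp (4 * m) = a^2
            \<and> c > 0 \<and> smooth_on J \<zeta> \<and> (\<forall>t\<in>J. (deriv \<zeta> t)^2 * cosh (\<zeta> t) = c^2)
            \<and> (\<forall>t\<in>J. g t = \<zeta> t / 2 + m)))
   \<and> (\<forall>\<zeta> c. c > 0 \<and> smooth_on J \<zeta> \<longrightarrow>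
        ((\<forall>t\<in>J. (deriv \<zeta> t)^2 * cosh (\<zeta> t) = c^2) \<longleftrightarrow>
         (\<exists>d. (\<forall>t\<in>J. I0 (\<zeta> t) = c * t + d) \<or> (\<forall>t\<in>J. I0 (\<zeta> t) = - c * t + d))))
   \<and> (\<forall>x0 x0' x0''. x0' + x0'' = x0 \<longrightarrow>
        (\<forall>s t. translation_surface (\<lambda>s. sol_pt x0' s 0) (\<lambda>t. sol_pt x0'' 0 t) s t = sol_pt x0 s t)
        \<and> sol_minimal (translation_surface (\<lambda>s. sol_pt x0' s 0) (\<lambda>t. sol_pt x0'' 0 t)) UNIV)"
proof -
  note I = assms(1,2,3) and J = assms(4,5,6) and sf = assms(7) and sg = assms(8)
  have nz_of_nconst: "\<exists>x\<in>S. deriv h x \<noteq> 0"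
    if S: "open S" "is_interval S" and sh: "smooth_on S h" and nc: "\<not> (\<exists>y. \<forall>x\<in>S. h x = y)" for S h
  proof (rule ccontr)
    assume "\<not> (\<exists>x\<in>S. deriv h x \<noteq> 0)"
    then have z: "\<forall>x\<in>S. deriv h x = 0" by auto
    have "\<exists>y. \<forall>x\<in>S. h x = y"
    proof (rule has_field_derivative_zero_constant)
      show "convex S" using S(2) by (rule is_interval_convex)
      fix x assume "x \<in> S"
      then show "(h has_real_derivative 0) (at x within S)"
        using smooth_D0[OF sh S(1)] z by (metis has_field_derivative_at_within)
    qed
    then show False using nc by blast
  qed
  have part1: "sol_minimal (translation_surface (\<lambda>s. sol_pt s (f s) 0) (\<lambda>t. sol_pt t 0 (g t))) (I \<times> J)
      \<longleftrightarrow>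
        (\<exists>y0. \<forall>s\<in>I. f s = y0)
      \<or> (\<exists>z0. \<forall>t\<in>J. g t = z0)
      \<or> (\<exists>a b m c \<zeta>. a \<noteq> 0 \<and> (\<forall>s\<in>I. f s = a * s + b) \<and> exp (4 * m) = a^2
            \<and> c > 0 \<and> smooth_on J \<zeta> \<and> (\<forall>t\<in>J. (deriv \<zeta> t)^2 * cosh (\<zeta> t) = c^2)
            \<and> (\<forall>t\<in>J. g t = \<zeta> t / 2 + m))"
    unfolding transl_eq minimal_iff[OF I(1) J(1) sf sg]
  proof
    assume P: "\<forall>s\<in>I. \<forall>t\<in>J. pde (deriv f s) (deriv (deriv f) s) (deriv g t) (deriv (deriv g) t) (g t) = 0"
    show "(\<exists>y0. \<forall>s\<in>I. f s = y0)
      \<or> (\<exists>z0. \<forall>t\<in>J. g t = z0)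
      \<or> (\<exists>a b m c \<zeta>. a \<noteq> 0 \<and> (\<forall>s\<in>I. f s = a * s + b) \<and> exp (4 * m) = a^2
            \<and> c > 0 \<and> smooth_on J \<zeta> \<and> (\<forall>t\<in>J. (deriv \<zeta> t)^2 * cosh (\<zeta> t) = c^2)
            \<and> (\<forall>t\<in>J. g t = \<zeta> t / 2 + m))"
    proof (cases "(\<exists>y0. \<forall>s\<in>I. f s = y0) \<or> (\<exists>z0. \<forall>t\<in>J. g t = z0)")
      case True then show ?thesis by blast
    next
      case False
      then obtain s1 where s1: "s1 \<in> I" "deriv f s1 \<noteq> 0" using nz_of_nconst[OF I(1,2) sf] by blast
      obtain t0 where t0: "t0 \<in> J" "deriv g t0 \<noteq> 0" using nz_of_nconst[OF J(1,2) sg] False by blast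
      show ?thesis
      proof (cases "\<forall>s\<in>I. deriv (deriv f) s = 0")
        case True
        have "\<exists>a b m c \<zeta>. a \<noteq> 0 \<and> (\<forall>s\<in>I. f s = a * s + b) \<and> exp (4 * m) = a^2
            \<and> c > 0 \<and> smooth_on J \<zeta> \<and> (\<forall>t\<in>J. (deriv \<zeta> t)^2 * cosh (\<zeta> t) = c^2)
            \<and> (\<forall>t\<in>J. g t = \<zeta> t / 2 + m)"
          by (rule caseA[OF I(1,2) J(1,2) sg smooth_D0[OF sf I(1)] smooth_D1[OF sf I(1)]
                smooth_D0[OF sg J(1)] smooth_D1[OF sg J(1)] _ _ s1 t0]) (use P True in auto)
        then show ?thesis by blast
      next
        case False
        then obtain s0 where s0: "s0 \<in> I" "deriv (deriv f) s0 \<noteq> 0" by blast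
        have False
          by (rule caseB[OF I(1) J(1) smooth_D1[OF sf I(1)] smooth_D0[OF sg J(1)] smooth_D1[OF sg J(1)]
                _ t0 s0]) (use P in auto)
        then show ?thesis ..
      qed
    qed
  next
    assume "(\<exists>y0. \<forall>s\<in>I. f s = y0)
      \<or> (\<exists>z0. \<forall>t\<in>J. g t = z0)
      \<or> (\<exists>a b m c \<zeta>. a \<noteq> 0 \<and> (\<forall>s\<in>I. f s = a * s + b) \<and> exp (4 * m) = a^2
            \<and> c > 0 \<and> smooth_on J \<zeta> \<and> (\<forall>t\<in>J. (deriv \<zeta> t)^2 * cosh (\<zeta> t) = c^2)
            \<and> (\<forall>t\<in>J. g t = \<zeta> t / 2 + m))"
    then show "\<forall>s\<in>I. \<forall>t\<in>J. pde (deriv f s) (deriv (deriv f) s) (deriv g t) (deriv (deriv g) t) (g t) = 0"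
      by (rule classify_if[OF I(1) J(1) sf sg])
  qed
  have part2: "\<forall>\<zeta> c. c > 0 \<and> smooth_on J \<zeta> \<longrightarrow>
        ((\<forall>t\<in>J. (deriv \<zeta> t)^2 * cosh (\<zeta> t) = c^2) \<longleftrightarrow>
         (\<exists>d. (\<forall>t\<in>J. I0 (\<zeta> t) = c * t + d) \<or> (\<forall>t\<in>J. I0 (\<zeta> t) = - c * t + d)))"
    using ode_equiv[OF J(1,2)] by blast
  have part3: "\<forall>x0 x0' x0''. x0' + x0'' = x0 \<longrightarrow>
        (\<forall>s t. translation_surface (\<lambda>s. sol_pt x0' s 0) (\<lambda>t. sol_pt x0'' 0 t) s t = sol_pt x0 s t)
        \<and> sol_minimal (translation_surface (\<lambda>s. sol_pt x0' s 0) (\<lambda>t. sol_pt x0'' 0 t)) UNIV"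
    using vertical_eq vertical_min by blast
  show ?thesis using part1 part2 part3 by blast
qed

end
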